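(* Let $\Gamma\in[0,1]$, $d_0\in(0,1]$, and $\gamma_N=\Gamma/(N-1)$. For $N\ge2$ define $h_N(k)$, $k=1,\dots,N$, by $h_N(N)=N$ and $h_N(k)=k\Big[1+\gamma_N(N-k)\frac{h_N(k+1)}{k+1}\Big]$ for $k<N$; equivalently $h_N(k)=k\big[1+(N-k)\gamma_N\big[1+(N-k-1)\gamma_N\big[1+\cdots\big]\big]\big]$ (the nested expression terminating after $N-k$ levels). Let $k_N\in\{1,\dots,N\}$ satisfy $k_N/N\to d_0$. Then $$\lim_{N\to\infty}\frac{h_N(k_N)}{N}=\frac{d_0}{1-\Gamma+\Gamma d_0}.$$ *)

theory Defs
  imports "HOL-Analysis.Analysis"
begin

definition gammaN :: "real \<Rightarrow> nat \<Rightarrow> real" where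
  "gammaN G N = G / (real N - 1)"

text \<open>h_N(k): h_N(N) = N and h_N(k) = k (1 + gamma_N (N - k) h_N(k+1)/(k+1)) for k < N.
  Values for k > N are irrelevant (set to N).\<close>
function hN :: "real \<Rightarrow> nat \<Rightarrow> nat \<Rightarrow> real" where
  "hN G N k = (if N \<le> k then real N
     else real k * (1 + gammaN G N * real (N - k) * hN G N (k + 1) / real (k + 1)))"
  by auto
termination by (relation "Wellfounded.measure (\<lambda>(G, N, k). N - k)") auto

declare hN.simps [simp del]

end

theory Submission
  imports Defs "HOL-Real_Asymp.Real_Asymp"
begin

fun U :: "real \<Rightarrow> nat \<Rightarrow> real" where
  "U g 0 = 1"
| "U g (Suc m) = 1 + g * real (Suc m) * U g m"

lemma hN_U: "k \<le> N \<Longrightarrow> hN G N k = real k * U (gammaN G N) (N - k)"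
proof (induction "N - k" arbitrary: k)
  case 0
  then have "k = N" by simp
  then show ?case by (simp add: hN.simps)
next
  case (Suc n)
  then have kN: "k < N" and n: "N - (k+1) = n" and NS: "N - k = Suc n" by auto
  have IH: "hN G N (k+1) = real (k+1) * U (gammaN G N) n"
    using Suc(1)[of "k+1"] n kN by auto
  have "hN G N k = real k * (1 + gammaN G N * real (N - k) * hN G N (k + 1) / real (k + 1))"
    using kN by (subst hN.simps) simp
  also have "\<dots> = real k * U (gammaN G N) (N - k)"
    unfolding IH NS by simp
  finally show ?case .
qed

lemma U_ge1: "0 \<le> g \<Longrightarrow> 1 \<le> U g m"
  by (induction m) auto

lemma U_mono: "0 \<le> g \<Longrightarrow> U g m \<le> U g (Suc m)"
proof (induction m)
  case 0 then show ?case by simp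
next
  case (Suc m)
  have "g * real (Suc m) * U g m \<le> g * real (Suc (Suc m)) * U g (Suc m)"
    using Suc U_ge1[of g m] by (intro mult_mono) auto
  then show ?case by simp
qed

lemma U_upper:
  assumes g: "0 \<le> g" and y: "g * real m < 1"
  shows "U g m \<le> 1 / (1 - g * real m)"
proof (cases m)
  case 0 then show ?thesis by simp
next
  case (Suc n)
  have "U g m = 1 + g * real m * U g n" using Suc by simp
  also have "\<dots> \<le> 1 + g * real m * U g m"
    using U_mono[OF g, of n] Suc g by (intro add_left_mono mult_left_mono) auto
  finally have "U g m * (1 - g * real m) \<le> 1" by (simp add: algebra_simps)
  then show ?thesis using y by (simp add: field_simps)
qed

lemma U_diff:
  assumes g: "0 \<le> g" and y: "g * real m < 1" and m': "1 \<le> m'" "m' \<le> m"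
  shows "U g m' - U g (m' - 1) \<le> g / (1 - g * real m)^2"
  using m'
proof (induction m' rule: dec_induct)
  case base
  have "(1 - g * real m)^2 \<le> 1"
    using y g by (simp add: power2_eq_square mult_le_one)
  moreover have "0 < (1 - g * real m)^2" using y by simp
  ultimately have "g \<le> g / (1 - g * real m)^2"
    using g by (simp add: field_simps mult_le_cancel_left1) (metis mult_left_le)
  then show ?case by simp
next
  case (step n)
  define y where "y = g * real m"
  have y1: "y < 1" using y y_def by simp
  have n1: "Suc n - 1 = n" by simp
  obtain p where p: "n = Suc p" using step(1) by (cases n) auto
  have yn: "g * real n \<le> y" unfolding y_def using step g by (intro mult_left_mono) auto
  have y0: "0 \<le> g * real n" using g by simp
  have Un: "U g n \<le> 1 / (1 - y)"
  proof -
    have "U g n \<le> 1 / (1 - g * real n)" using U_upper[OF g] yn y1 by simp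
    also have "\<dots> \<le> 1 / (1 - y)" using yn y1 by (intro divide_left_mono) auto
    finally show ?thesis .
  qed
  have IH: "U g n - U g p \<le> g / (1 - y)^2" using step p y_def by simp
  have eq: "U g (Suc n) - U g n = g * U g n + g * real n * (U g n - U g p)"
    using p by (simp add: algebra_simps)
  have "g * U g n \<le> g / (1 - y)" using Un g mult_left_mono by fastforce
  moreover have "g * real n * (U g n - U g p) \<le> y * (g / (1 - y)^2)"
    using IH yn y0 U_mono[OF g, of p] p
    by (intro mult_mono) (auto simp: y_def)
  ultimately have "U g (Suc n) - U g n \<le> g / (1 - y) + y * (g / (1 - y)^2)"
    using eq by linarith
  also have "\<dots> = g / (1 - y)^2"
  proof -
    have t: "1 - y \<noteq> 0" using y1 by simp
    show ?thesis using t by (simp add: divide_simps power2_eq_square) (simp add: algebra_simps)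
  qed
  finally show ?case using y_def by simp
qed

lemma U_lower:
  assumes g: "0 \<le> g" and y: "g * real m < 1"
  shows "1 / (1 - g * real m) - g / (1 - g * real m)^3 \<le> U g m"
proof (cases m)
  case 0
  then show ?thesis using g by simp
next
  case (Suc n)
  define y where "y = g * real m"
  have y1: "y < 1" and y0: "0 \<le> y" using y g y_def by auto
  have D: "U g m - U g n \<le> g / (1 - y)^2"
    using U_diff[OF g y, of m] Suc y_def by simp
  have "U g m = 1 + y * U g n" using Suc y_def by simp
  also have "\<dots> \<ge> 1 + y * (U g m - g / (1 - y)^2)"
    using D y0 by (intro add_left_mono mult_left_mono) auto
  finally have "U g m * (1 - y) \<ge> 1 - y * (g / (1 - y)^2)" by (simp add: algebra_simps)
  then have "U g m \<ge> (1 - y * (g / (1 - y)^2)) / (1 - y)"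
    using y1 by (simp add: field_simps)
  moreover have "(1 - y * (g / (1 - y)^2)) / (1 - y) \<ge> 1 / (1 - y) - g / (1 - y)^3"
  proof -
    have "y * (g / (1 - y)^2) \<le> g / (1 - y)^2"
      using y1 y0 g by (intro mult_left_le_one_le) auto
    then have "(1 - y * (g / (1 - y)^2)) / (1 - y) \<ge> (1 - g / (1 - y)^2) / (1 - y)"
      using y1 by (intro divide_right_mono) auto
    also have "(1 - g / (1 - y)^2) / (1 - y) = 1 / (1 - y) - g / (1 - y)^3"
    proof -
      have t: "1 - y \<noteq> 0" using y1 by simp
      show ?thesis using t by (simp add: divide_simps power2_eq_square power3_eq_cube)
    qed
    finally show ?thesis .
  qed
  ultimately show ?thesis using y_def by simp
qed

theorem mainTheorem11:
  fixes G d0 :: real and k :: "nat \<Rightarrow> nat"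
  assumes "0 \<le> G" "G \<le> 1" "0 < d0" "d0 \<le> 1"
    and "\<And>N. N \<ge> 2 \<Longrightarrow> 1 \<le> k N \<and> k N \<le> N"
    and "(\<lambda>N. real (k N) / real N) \<longlonglongrightarrow> d0"
  shows "(\<lambda>N. hN G N (k N) / real N) \<longlonglongrightarrow> d0 / (1 - G + G * d0)"
proof -
  note kb = assms(5)
  define g where "g N = gammaN G N" for N
  define y where "y N = g N * real (N - k N)" for N
  define q where "q N = real (k N) / real N" for N
  have q: "q \<longlonglongrightarrow> d0" using assms(6) unfolding q_def[abs_def] by simp
  have G1: "G * (1 - d0) < 1" using assms(1-4)
    by (smt (verit) mult_left_le_one_le)
  have gl: "g \<longlonglongrightarrow> 0" unfolding g_def gammaN_def by real_asymp
  have r: "(\<lambda>N. real N / (real N - 1)) \<longlonglongrightarrow> 1" by real_asymp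
  have yeq: "eventually (\<lambda>N. y N = G * (real N / (real N - 1)) * (1 - q N)) sequentially"
    using eventually_ge_at_top[of 2]
  proof eventually_elim
    case (elim N)
    have "k N \<le> N" using kb elim by auto
    then have "real (N - k N) = real N - real (k N)" by simp
    moreover have "real N \<noteq> 0" "real N - 1 \<noteq> 0" using elim by auto
    ultimately show ?case unfolding y_def g_def gammaN_def q_def
      by (simp add: field_simps)
  qed
  have yl: "y \<longlonglongrightarrow> G * (1 - d0)"
  proof -
    have "(\<lambda>N. G * (real N / (real N - 1)) * (1 - q N)) \<longlonglongrightarrow> G * 1 * (1 - d0)"
      by (intro tendsto_intros r q)
    then show ?thesis using yeq by (simp add: tendsto_cong)
  qed
  have ylt: "eventually (\<lambda>N. y N < 1) sequentially"
    using order_tendstoD(2)[OF yl G1] .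
  have hq: "eventually (\<lambda>N. hN G N (k N) / real N = q N * U (g N) (N - k N)) sequentially"
    using eventually_ge_at_top[of 2]
  proof eventually_elim
    case (elim N)
    have "k N \<le> N" using kb elim by auto
    then show ?case using hN_U[of "k N" N G] unfolding q_def g_def by simp
  qed
  have g0: "0 \<le> g N" if "N \<ge> 1" for N unfolding g_def gammaN_def using assms(1) that
    by auto
  have q0: "\<And>N. 0 \<le> q N" unfolding q_def by simp
  have lim: "d0 / (1 - G + G * d0) = d0 * (1 / (1 - G * (1 - d0)))"
    by (simp add: algebra_simps)
  have lim2: "d0 / (1 - G + G * d0) = d0 * (1 / (1 - G * (1 - d0)) - 0 / (1 - G * (1 - d0))^3)"
    by (simp add: algebra_simps)
  have ne: "1 - G * (1 - d0) \<noteq> 0" using G1 by simp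
  show ?thesis
  proof (rule real_tendsto_sandwich)
    show "(\<lambda>N. q N * (1 / (1 - y N) - g N / (1 - y N)^3)) \<longlonglongrightarrow> d0 / (1 - G + G * d0)"
      unfolding lim2 using ne by (intro tendsto_intros q yl gl) auto
    show "(\<lambda>N. q N * (1 / (1 - y N))) \<longlonglongrightarrow> d0 / (1 - G + G * d0)"
      unfolding lim using ne by (intro tendsto_intros q yl) auto
    show "eventually (\<lambda>N. q N * (1 / (1 - y N) - g N / (1 - y N)^3) \<le> hN G N (k N) / real N) sequentially"
      using ylt hq eventually_ge_at_top[of 1]
    proof eventually_elim
      case (elim N)
      show ?case unfolding elim(2) using U_lower[OF g0[OF elim(3)], of "N - k N"] elim(1) q0[of N]
        by (intro mult_left_mono) (auto simp: y_def)
    qed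
    show "eventually (\<lambda>N. hN G N (k N) / real N \<le> q N * (1 / (1 - y N))) sequentially"
      using ylt hq eventually_ge_at_top[of 1]
    proof eventually_elim
      case (elim N)
      show ?case unfolding elim(2) using U_upper[OF g0[OF elim(3)], of "N - k N"] elim(1) q0[of N]
        by (intro mult_left_mono) (auto simp: y_def)
    qed
  qed
qed

end
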